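(* Let $N=(S,T,F,M_0,\ell)$ be a Petri net and $N'=(S',T',F',M'_0,\ell')$ a plain Petri net with $S'\subseteq S$ and $M'_0=M_0\restriction S'$. Suppose: (1) for every $t\in T$ with $\ell(t)\ne\tau$ there are $t'\in T'$ with $\ell'(t')=\ell(t)$ and a finite $G\in\mathbb N^T$ with $\ell(G)\equiv\emptyset$ such that $[\![t']\!]=[\![t+G]\!]$; (2) for any finite $G\in\mathbb Z^T$ with $\ell(G)\equiv\emptyset$, $M'\in\mathbb N^{S'}$, $U'\in\mathbb N^{T'}$ and $U\in\mathbb N^T$ with $\ell'(U')=\ell(U)$, $M'+{}^\bullet U'\in[M'_0\rangle_{N'}$ and $M:=M'+{}^\bullet U'+(M_0-M'_0)+[\![G]\!]-{}^\bullet U\in\mathbb N^S$ with $M+{}^\bullet U\in[M_0\rangle_N$, it holds that: (a) there is no infinite sequence $M\xrightarrow{\tau}M_1\xrightarrow{\tau}M_2\xrightarrow{\tau}\cdots$; (b) if $M'\xrightarrow{a}$ with $a\in\mathrm{Act}$ then $M\xrightarrow{a}$ or $M\xrightarrow{\tau}$; (c) if $M\xrightarrow{a}$ with $a\in\mathrm{Act}$ then $M'\xrightarrow{a}$. Then $N\approx^\Delta_{bSTb}N'$.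
   Context: Fix visible actions $\mathrm{Act}$ and $\tau\notin\mathrm{Act}$. A Petri net $(S,T,F,M_0,\ell)$ has disjoint $S,T$, $F:(S\times T)\cup(T\times S)\to\mathbb N$, $M_0\in\mathbb N^S$, $\ell:T\to\mathrm{Act}\cup\{\tau\}$. A signed multiset over $X$ is a function $X\to\mathbb Z$ (finite if finitely many nonzero values); operations are pointwise; signed multisets over different sets are identified when they agree on the common domain and are zero elsewhere (e.g. $M'\in\mathbb N^{S'}$ is viewed over $S$). ${}^\bullet x(y)=F(y,x)$, $x^\bullet(y)=F(x,y)$, extended additively to finite signed multisets $G$ of transitions; $[\![G]\!]=G^\bullet-{}^\bullet G$. $\ell(G)=\sum_tG(t)\{\ell(t)\}$, and $\ell(G)\equiv\emptyset$ means $\ell(G)(a)=0$ for every $a\in\mathrm{Act}$. For a finite nonempty multiset $G$, $M[G\rangle M'$ iff ${}^\bullet G\le M$ and $M'=M-{}^\bullet G+G^\bullet$; $[M_0\rangle_N$ is the set of reachable markings. For arbitrary markings, $M\xrightarrow{\alpha}$ means $M[t\rangle$ for some $t$ with label $\alpha$ (in the respective net), and $M\xrightarrow{\tau}M_1$ means $M[t\rangle M_1$ with $\ell(t)=\tau$. Plain: $\ell$ injective and never $\tau$. $N\approx^\Delta_{bSTb}N'$ (branching ST-bisimilarity with explicit divergence): there is a relation $\mathcal B$ between ST-markings $(M,U)\in\mathbb N^S\times T^*$ of $N$ and of $N'$, relating $(M_0,\varepsilon)$ and $(M'_0,\varepsilon)$, such that: if $\mathfrak M_1\mathcal B\mathfrak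 M_2$ and $\mathfrak M_1\xrightarrow{\alpha}\mathfrak M_1'$ then $\mathfrak M_2\Rightarrow\mathfrak M_2^\dagger\xrightarrow{(\alpha)}\mathfrak M_2'$ with $\mathfrak M_1\mathcal B\mathfrak M_2^\dagger$, $\mathfrak M_1'\mathcal B\mathfrak M_2'$ ($\Rightarrow$ reflexive transitive closure of $\xrightarrow{\tau}$; $\xrightarrow{(\alpha)}$ is $\xrightarrow{\alpha}$ or, if $\alpha=\tau$, equality), and symmetrically; and if $\mathfrak M_1\mathcal B\mathfrak M_2$ and an infinite $\tau$-sequence from $\mathfrak M_1$ has all states related to $\mathfrak M_2$, there is an infinite $\tau$-sequence from $\mathfrak M_2$ with all pairs of states related, and symmetrically. ST-transitions: $(M,U)\xrightarrow{a^+}(M-{}^\bullet t,Ut)$ iff $\ell(t)=a\in\mathrm{Act}$, $M[t\rangle$; $(M,U)\xrightarrow{a^{-n}}(M+t^\bullet,U^{-n})$ iff the $n$-th element $t$ of $U$ has label $a$ ($U^{-n}$: it removed); $(M,U)\xrightarrow{\tau}(M',U)$ iff $M[t\rangle M'$ with $\ell(t)=\tau$. *)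

theory Defs
  imports Main
begin

text \<open>Labelled Petri nets. Places have type 's, transitions type 't, visible actions type 'a;
  the label None represents tau. The flow function F is split into
  pre t s = F(s,t) and post t s = F(t,s).\<close>

record ('s, 't, 'a) pnet =
  places :: "'s set"
  trans  :: "'t set"
  pre    :: "'t \<Rightarrow> 's \<Rightarrow> nat"
  post   :: "'t \<Rightarrow> 's \<Rightarrow> nat"
  init   :: "'s \<Rightarrow> nat"
  lab    :: "'t \<Rightarrow> 'a option"

text \<open>Well-formedness: F is only defined on (S x T) and (T x S); M0 is a marking over S.\<close>
definition wf_net :: "('s, 't, 'a) pnet \<Rightarrow> bool" where
  "wf_net N \<longleftrightarrow>
     (\<forall>t\<in>trans N. \<forall>s. s \<notin> places N \<longrightarrow> pre N t s = 0 \<and> post N t s = 0) \<and>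
     (\<forall>s. s \<notin> places N \<longrightarrow> init N s = 0)"

definition plain :: "('s, 't, 'a) pnet \<Rightarrow> bool" where
  "plain N \<longleftrightarrow> inj_on (lab N) (trans N) \<and> (\<forall>t\<in>trans N. lab N t \<noteq> None)"

definition supp :: "('x \<Rightarrow> 'b::zero) \<Rightarrow> 'x set" where
  "supp G = {x. G x \<noteq> 0}"

definition fin_ms :: "('s, 't, 'a) pnet \<Rightarrow> ('t \<Rightarrow> 'b::zero) \<Rightarrow> bool" where
  "fin_ms N G \<longleftrightarrow> finite (supp G) \<and> supp G \<subseteq> trans N"

definition preZ :: "('s, 't, 'a) pnet \<Rightarrow> ('t \<Rightarrow> int) \<Rightarrow> 's \<Rightarrow> int" where
  "preZ N G s = (\<Sum>t\<in>supp G. G t * int (pre N t s))"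

definition postZ :: "('s, 't, 'a) pnet \<Rightarrow> ('t \<Rightarrow> int) \<Rightarrow> 's \<Rightarrow> int" where
  "postZ N G s = (\<Sum>t\<in>supp G. G t * int (post N t s))"

definition effZ :: "('s, 't, 'a) pnet \<Rightarrow> ('t \<Rightarrow> int) \<Rightarrow> 's \<Rightarrow> int" where
  "effZ N G s = postZ N G s - preZ N G s"

definition preN :: "('s, 't, 'a) pnet \<Rightarrow> ('t \<Rightarrow> nat) \<Rightarrow> 's \<Rightarrow> nat" where
  "preN N G s = (\<Sum>t\<in>supp G. G t * pre N t s)"

definition postN :: "('s, 't, 'a) pnet \<Rightarrow> ('t \<Rightarrow> nat) \<Rightarrow> 's \<Rightarrow> nat" where
  "postN N G s = (\<Sum>t\<in>supp G. G t * post N t s)"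

definition labcnt :: "('s, 't, 'a) pnet \<Rightarrow> ('t \<Rightarrow> int) \<Rightarrow> 'a option \<Rightarrow> int" where
  "labcnt N G al = (\<Sum>t\<in>{t\<in>supp G. lab N t = al}. G t)"

text \<open>l(G) is equivalent to the empty multiset: no visible action occurs with nonzero multiplicity.\<close>
definition lab_empty :: "('s, 't, 'a) pnet \<Rightarrow> ('t \<Rightarrow> int) \<Rightarrow> bool" where
  "lab_empty N G \<longleftrightarrow> (\<forall>a. labcnt N G (Some a) = 0)"

definition fire :: "('s, 't, 'a) pnet \<Rightarrow> ('s \<Rightarrow> nat) \<Rightarrow> ('t \<Rightarrow> nat) \<Rightarrow> ('s \<Rightarrow> nat) \<Rightarrow> bool" where
  "fire N M G M' \<longleftrightarrow> fin_ms N G \<and> supp G \<noteq> {} \<and> preN N G \<le> M \<and>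
     M' = (\<lambda>s. M s - preN N G s + postN N G s)"

definition reach :: "('s, 't, 'a) pnet \<Rightarrow> ('s \<Rightarrow> nat) set" where
  "reach N = {M. (\<lambda>M1 M2. \<exists>G. fire N M1 G M2)\<^sup>*\<^sup>* (init N) M}"

definition enabled_lab :: "('s, 't, 'a) pnet \<Rightarrow> ('s \<Rightarrow> nat) \<Rightarrow> 'a option \<Rightarrow> bool" where
  "enabled_lab N M al \<longleftrightarrow> (\<exists>t\<in>trans N. lab N t = al \<and> pre N t \<le> M)"

definition tau_step :: "('s, 't, 'a) pnet \<Rightarrow> ('s \<Rightarrow> nat) \<Rightarrow> ('s \<Rightarrow> nat) \<Rightarrow> bool" where
  "tau_step N M M' \<longleftrightarrow> (\<exists>t\<in>trans N. lab N t = None \<and> pre N t \<le> M \<and>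
      M' = (\<lambda>s. M s - pre N t s + post N t s))"

text \<open>ST-semantics. ST-labels: a^+, a^{-n} (n counted from 1), tau.\<close>
datatype 'a stlab = Start 'a | Fin 'a nat | Tau

type_synonym ('s, 't) stmark = "('s \<Rightarrow> nat) \<times> 't list"

definition st_step :: "('s, 't, 'a) pnet \<Rightarrow> ('s, 't) stmark \<Rightarrow> 'a stlab \<Rightarrow> ('s, 't) stmark \<Rightarrow> bool" where
  "st_step N m al m' \<longleftrightarrow> (case al of
      Start a \<Rightarrow> (\<exists>t\<in>trans N. lab N t = Some a \<and> pre N t \<le> fst m \<and>
                   m' = ((\<lambda>s. fst m s - pre N t s), snd m @ [t]))
    | Fin a n \<Rightarrow> 1 \<le> n \<and> n \<le> length (snd m) \<and> lab N (snd m ! (n - 1)) = Some a \<and>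
                   m' = ((\<lambda>s. fst m s + post N (snd m ! (n - 1)) s),
                         take (n - 1) (snd m) @ drop n (snd m))
    | Tau \<Rightarrow> tau_step N (fst m) (fst m') \<and> snd m' = snd m)"

definition stmarks :: "('s, 't, 'a) pnet \<Rightarrow> ('s, 't) stmark set" where
  "stmarks N = {(M, U). (\<forall>s. s \<notin> places N \<longrightarrow> M s = 0) \<and> set U \<subseteq> trans N}"

text \<open>One direction of the transfer and divergence conditions of a branching bisimulation
  with explicit divergence, for labelled transition relations step1 and step2 with silent label tau.\<close>
definition bb_half :: "('x \<Rightarrow> 'l \<Rightarrow> 'x \<Rightarrow> bool) \<Rightarrow> ('y \<Rightarrow> 'l \<Rightarrow> 'y \<Rightarrow> bool) \<Rightarrow> 'l \<Rightarrow>
                       ('x \<times> 'y) set \<Rightarrow> bool" where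
  "bb_half step1 step2 tau B \<longleftrightarrow>
     (\<forall>m1 m2 al m1'. (m1, m2) \<in> B \<and> step1 m1 al m1' \<longrightarrow>
        (\<exists>m2d m2'. (\<lambda>x y. step2 x tau y)\<^sup>*\<^sup>* m2 m2d \<and>
           (step2 m2d al m2' \<or> (al = tau \<and> m2' = m2d)) \<and>
           (m1, m2d) \<in> B \<and> (m1', m2') \<in> B)) \<and>
     (\<forall>m1 m2 f. (m1, m2) \<in> B \<and> f 0 = m1 \<and> (\<forall>i. step1 (f i) tau (f (Suc i))) \<and>
        (\<forall>i. (f i, m2) \<in> B) \<longrightarrow>
        (\<exists>g. g 0 = m2 \<and> (\<forall>i. step2 (g i) tau (g (Suc i))) \<and> (\<forall>i j. (f i, g j) \<in> B)))"

definition bSTb_div :: "('s, 't, 'a) pnet \<Rightarrow> ('s2, 'u, 'a) pnet \<Rightarrow> bool" where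
  "bSTb_div N N' \<longleftrightarrow> (\<exists>B. B \<subseteq> stmarks N \<times> stmarks N' \<and>
      ((init N, []), (init N', [])) \<in> B \<and>
      bb_half (st_step N) (st_step N') Tau B \<and>
      bb_half (st_step N') (st_step N) Tau (B\<inverse>))"

end

theory Submission
  imports Defs
begin


lemma supp_count_list: "supp (count_list U) = set U"
  by (auto simp: supp_def count_list_0_iff)

lemma supp_count_list_int: "supp (\<lambda>x. int (count_list U x)) = set U"
  by (auto simp: supp_def count_list_0_iff)

lemma preN_list: "preN N (count_list U) s = sum_list (map (\<lambda>t. pre N t s) U)"
  unfolding preN_def supp_count_list sum_list_map_eq_sum_count ..

lemma preN_list_fun: "preN N (count_list U) = (\<lambda>s. sum_list (map (\<lambda>t. pre N t s) U))"
  by (rule ext) (rule preN_list)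

lemma sum_list_remove_nth:
  "k < length U \<Longrightarrow> sum_list (map (f::_\<Rightarrow>nat) U) = sum_list (map f (take k U @ drop (Suc k) U)) + f (U ! k)"
proof -
  assume k: "k < length U"
  have "U = take k U @ U ! k # drop (Suc k) U" using k by (simp add: id_take_nth_drop)
  then have "sum_list (map f U) = sum_list (map f (take k U @ U ! k # drop (Suc k) U))" by simp
  then show ?thesis by simp
qed

lemma mem_le_sum_list: "t \<in> set U \<Longrightarrow> (f t :: nat) \<le> sum_list (map f U)"
  by (induction U) auto

lemma fire_single:
  assumes "t \<in> trans N" "pre N t \<le> M"
  shows "fire N M (\<lambda>x. if x = t then 1 else 0) (\<lambda>s. M s - pre N t s + post N t s)"
proof -
  have s: "supp (\<lambda>x. if x = t then 1::nat else 0) = {t}" by (auto simp: supp_def)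
  have p: "preN N (\<lambda>x. if x = t then 1 else 0) = pre N t" by (rule ext) (simp add: preN_def s)
  have q: "postN N (\<lambda>x. if x = t then 1 else 0) = post N t" by (rule ext) (simp add: postN_def s)
  show ?thesis unfolding fire_def p q fin_ms_def s using assms by auto
qed

lemma reach_step:
  assumes "M \<in> reach N" "t \<in> trans N" "pre N t \<le> M"
  shows "(\<lambda>s. M s - pre N t s + post N t s) \<in> reach N"
  using assms fire_single[OF assms(2,3)] unfolding reach_def
  by (auto intro: rtranclp.rtrancl_into_rtrancl)

lemma effZ_sum:
  assumes "finite A" "supp G \<subseteq> A"
  shows "effZ N G s = (\<Sum>t\<in>A. G t * (int (post N t s) - int (pre N t s)))"
proof -
  have 1: "postZ N G s = (\<Sum>t\<in>A. G t * int (post N t s))" unfolding postZ_def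
    by (rule sum.mono_neutral_left) (use assms in \<open>auto simp: supp_def\<close>)
  have 2: "preZ N G s = (\<Sum>t\<in>A. G t * int (pre N t s))" unfolding preZ_def
    by (rule sum.mono_neutral_left) (use assms in \<open>auto simp: supp_def\<close>)
  show ?thesis unfolding effZ_def 1 2 by (simp add: sum_subtractf[symmetric] right_diff_distrib)
qed

lemma labcnt_sum:
  assumes "finite A" "supp G \<subseteq> A"
  shows "labcnt N G al = (\<Sum>t\<in>A. if lab N t = al then G t else 0)"
proof -
  have f: "finite (supp G)" using assms finite_subset by blast
  have "labcnt N G al = (\<Sum>t\<in>supp G. if lab N t = al then G t else 0)"
    unfolding labcnt_def using sum.inter_filter[OF f] by simp
  also have "\<dots> = (\<Sum>t\<in>A. if lab N t = al then G t else 0)"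
    by (rule sum.mono_neutral_left) (use assms in \<open>auto simp: supp_def\<close>)
  finally show ?thesis .
qed

lemma count_map_sum: "count_list (map f U) a = sum_list (map (\<lambda>t. if f t = a then 1 else 0) U)"
  by (induction U) auto

lemma labcnt_list: "labcnt N (\<lambda>x. int (count_list U x)) al = int (count_list (map (lab N) U) al)"
proof -
  have "labcnt N (\<lambda>x. int (count_list U x)) al =
        (\<Sum>t\<in>set U. if lab N t = al then int (count_list U t) else 0)"
    by (rule labcnt_sum) (auto simp: supp_count_list_int)
  also have "\<dots> = int (\<Sum>t\<in>set U. count_list U t * (if lab N t = al then 1 else 0))"
    by (simp add: of_nat_sum if_distrib cong: if_cong)
  also have "\<dots> = int (count_list (map (lab N) U) al)"
    unfolding count_map_sum sum_list_map_eq_sum_count map_map o_def by simp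
  finally show ?thesis .
qed


lemma supp_add: "supp (\<lambda>x. (G::_\<Rightarrow>int) x + H x) \<subseteq> supp G \<union> supp H"
  by (auto simp: supp_def)
lemma supp_diff: "supp (\<lambda>x. (G::_\<Rightarrow>int) x - H x) \<subseteq> supp G \<union> supp H"
  by (auto simp: supp_def)

lemma effZ_add:
  assumes "finite (supp G)" "finite (supp H)"
  shows "effZ N (\<lambda>x. G x + H x) s = effZ N G s + effZ N H s"
proof -
  let ?A = "supp G \<union> supp H"
  have f: "finite ?A" using assms by simp
  show ?thesis
    using effZ_sum[OF f supp_add, where N=N and s=s] effZ_sum[OF f, of G N s] effZ_sum[OF f, of H N s]
    by (simp add: sum.distrib distrib_right)
qed

lemma effZ_diff:
  assumes "finite (supp G)" "finite (supp H)"
  shows "effZ N (\<lambda>x. G x - H x) s = effZ N G s - effZ N H s"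
proof -
  let ?A = "supp G \<union> supp H"
  have f: "finite ?A" using assms by simp
  show ?thesis
    using effZ_sum[OF f supp_diff, where N=N and s=s] effZ_sum[OF f, of G N s] effZ_sum[OF f, of H N s]
    by (simp add: sum_subtractf left_diff_distrib)
qed

lemma supp_single: "supp (\<lambda>x. if x = t then (1::int) else 0) = {t}"
  by (auto simp: supp_def)

lemma effZ_single: "effZ N (\<lambda>x. if x = t then 1 else 0) s = int (post N t s) - int (pre N t s)"
  using effZ_sum[of "{t}" "\<lambda>x. if x = t then 1 else 0" N s] by (simp add: supp_single)

lemma labcnt_add:
  assumes "finite (supp G)" "finite (supp H)"
  shows "labcnt N (\<lambda>x. G x + H x) al = labcnt N G al + labcnt N H al"
proof -
  let ?A = "supp G \<union> supp H"
  have f: "finite ?A" using assms by simp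
  show ?thesis
    using labcnt_sum[OF f supp_add, where N=N and al=al] labcnt_sum[OF f, of G N al] labcnt_sum[OF f, of H N al]
    by (simp add: sum.distrib[symmetric] if_distrib cong: if_cong)
qed

lemma labcnt_diff:
  assumes "finite (supp G)" "finite (supp H)"
  shows "labcnt N (\<lambda>x. G x - H x) al = labcnt N G al - labcnt N H al"
proof -
  let ?A = "supp G \<union> supp H"
  have f: "finite ?A" using assms by simp
  show ?thesis
    using labcnt_sum[OF f supp_diff, where N=N and al=al] labcnt_sum[OF f, of G N al] labcnt_sum[OF f, of H N al]
    by (simp add: sum_subtractf[symmetric]) (rule sum.cong, auto)
qed

lemma labcnt_single: "labcnt N (\<lambda>x. if x = t then 1 else 0) al = (if lab N t = al then 1 else 0)"
  using labcnt_sum[of "{t}" "\<lambda>x. if x = t then 1 else 0" N al] by (simp add: supp_single)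


lemma fin_ms_add: "fin_ms N G \<Longrightarrow> fin_ms N H \<Longrightarrow> fin_ms N (\<lambda>x. (G::_\<Rightarrow>int) x + H x)"
  unfolding fin_ms_def using supp_add[of G H] by (meson finite_Un finite_subset le_sup_iff subset_trans)
lemma fin_ms_diff: "fin_ms N G \<Longrightarrow> fin_ms N H \<Longrightarrow> fin_ms N (\<lambda>x. (G::_\<Rightarrow>int) x - H x)"
  unfolding fin_ms_def using supp_diff[of G H] by (meson finite_Un finite_subset le_sup_iff subset_trans)
lemma fin_ms_single: "t \<in> trans N \<Longrightarrow> fin_ms N (\<lambda>x. if x = t then (1::int) else 0)"
  by (simp add: fin_ms_def supp_single)

locale L =
  fixes N :: "('s, 't, 'a) pnet" and N' :: "('s, 'u, 'a) pnet"
  assumes wfN: "wf_net N" and wfN': "wf_net N'" and plainN': "plain N'"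
    and sub: "places N' \<subseteq> places N"
    and initN': "\<forall>s. init N' s = (if s \<in> places N' then init N s else 0)"
    and cond1: "\<forall>t\<in>trans N. lab N t \<noteq> None \<longrightarrow>
       (\<exists>t'\<in>trans N'. lab N' t' = lab N t \<and>
          (\<exists>G :: 't \<Rightarrow> nat. fin_ms N G \<and> lab_empty N (\<lambda>x. int (G x)) \<and>
             (\<lambda>s. int (post N' t' s) - int (pre N' t' s)) =
             effZ N (\<lambda>x. int (G x) + (if x = t then 1 else 0))))"
    and cond2: "\<forall>(G :: 't \<Rightarrow> int) (M' :: 's \<Rightarrow> nat) (U' :: 'u \<Rightarrow> nat) (U :: 't \<Rightarrow> nat) (M :: 's \<Rightarrow> nat).
       fin_ms N G \<and> lab_empty N G \<and>
       (\<forall>s. s \<notin> places N' \<longrightarrow> M' s = 0) \<and> fin_ms N' U' \<and> fin_ms N U \<and>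
       (\<forall>al. labcnt N' (\<lambda>x. int (U' x)) al = labcnt N (\<lambda>x. int (U x)) al) \<and>
       (\<lambda>s. M' s + preN N' U' s) \<in> reach N' \<and>
       (\<forall>s. int (M s) = int (M' s) + int (preN N' U' s) + (int (init N s) - int (init N' s))
                         + effZ N G s - int (preN N U s)) \<and>
       (\<lambda>s. M s + preN N U s) \<in> reach N
       \<longrightarrow>
       (\<not> (\<exists>f. f 0 = M \<and> (\<forall>i. tau_step N (f i) (f (Suc i))))) \<and>
       (\<forall>a. enabled_lab N' M' (Some a) \<longrightarrow> enabled_lab N M (Some a) \<or> enabled_lab N M None) \<and>
       (\<forall>a. enabled_lab N M (Some a) \<longrightarrow> enabled_lab N' M' (Some a))"
  
begin

definition Rel :: "(('s, 't) stmark \<times> ('s, 'u) stmark) set" where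
  "Rel = {((M,U),(M',U')). (M,U) \<in> stmarks N \<and> (M',U') \<in> stmarks N' \<and>
     map (lab N) U = map (lab N') U' \<and>
     (\<lambda>s. M s + preN N (count_list U) s) \<in> reach N \<and>
     (\<lambda>s. M' s + preN N' (count_list U') s) \<in> reach N' \<and>
     (\<exists>G. fin_ms N G \<and> lab_empty N G \<and>
        (\<forall>s. int (M s) = int (M' s) + int (preN N' (count_list U') s) + (int (init N s) - int (init N' s))
                         + effZ N G s - int (preN N (count_list U) s)))}"

lemma Rel_cond:
  assumes "((M,U),(M',U')) \<in> Rel"
  shows "(\<not> (\<exists>f. f 0 = M \<and> (\<forall>i. tau_step N (f i) (f (Suc i))))) \<and>
       (\<forall>a. enabled_lab N' M' (Some a) \<longrightarrow> enabled_lab N M (Some a) \<or> enabled_lab N M None) \<and>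
       (\<forall>a. enabled_lab N M (Some a) \<longrightarrow> enabled_lab N' M' (Some a))"
proof -
  from assms obtain G where G: "fin_ms N G" "lab_empty N G"
    "\<forall>s. int (M s) = int (M' s) + int (preN N' (count_list U') s) + (int (init N s) - int (init N' s))
                         + effZ N G s - int (preN N (count_list U) s)"
    and st: "(M,U) \<in> stmarks N" "(M',U') \<in> stmarks N'" and mp: "map (lab N) U = map (lab N') U'"
    and r: "(\<lambda>s. M s + preN N (count_list U) s) \<in> reach N" "(\<lambda>s. M' s + preN N' (count_list U') s) \<in> reach N'"
    unfolding Rel_def by auto
  have f1: "fin_ms N' (count_list U')" "fin_ms N (count_list U)"
    using st by (auto simp: fin_ms_def supp_count_list stmarks_def)
  have lc: "\<forall>al. labcnt N' (\<lambda>x. int (count_list U' x)) al = labcnt N (\<lambda>x. int (count_list U x)) al"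
    by (simp add: labcnt_list mp)
  have z: "\<forall>s. s \<notin> places N' \<longrightarrow> M' s = 0" using st by (auto simp: stmarks_def)
  show ?thesis
    using cond2[rule_format, of G M' "count_list U'" "count_list U" M] G f1 lc z r by blast
qed

lemma pre_le_fun: "(f::'x\<Rightarrow>nat) \<le> g \<Longrightarrow> f s \<le> g s" by (simp add: le_fun_def)

lemma Rel_tau:
  assumes R: "((M,U),(M',U')) \<in> Rel" and ts: "tau_step N M M1"
  shows "((M1,U),(M',U')) \<in> Rel"
proof -
  from ts obtain t where t: "t \<in> trans N" "lab N t = None" "pre N t \<le> M"
    and M1: "M1 = (\<lambda>s. M s - pre N t s + post N t s)" unfolding tau_step_def by auto
  from R obtain G where G: "fin_ms N G" "lab_empty N G"
    "\<forall>s. int (M s) = int (M' s) + int (preN N' (count_list U') s) + (int (init N s) - int (init N' s))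
                         + effZ N G s - int (preN N (count_list U) s)"
    and st: "(M,U) \<in> stmarks N" "(M',U') \<in> stmarks N'" and mp: "map (lab N) U = map (lab N') U'"
    and r: "(\<lambda>s. M s + preN N (count_list U) s) \<in> reach N" "(\<lambda>s. M' s + preN N' (count_list U') s) \<in> reach N'"
    unfolding Rel_def by auto
  let ?d = "\<lambda>x. if x = t then (1::int) else 0"
  let ?G1 = "\<lambda>x. G x + ?d x"
  have fG: "finite (supp G)" using G(1) by (simp add: fin_ms_def)
  have fd: "finite (supp ?d)" by (simp add: supp_single)
  have fin1: "fin_ms N ?G1" by (rule fin_ms_add[OF G(1) fin_ms_single[OF t(1)]])
  have le1: "lab_empty N ?G1" using G(2) t(2) by (simp add: lab_empty_def labcnt_add[OF fG fd] labcnt_single)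
  have pl: "pre N t s \<le> M s" for s using t(3) by (simp add: le_fun_def)
  have eq1: "\<forall>s. int (M1 s) = int (M' s) + int (preN N' (count_list U') s) + (int (init N s) - int (init N' s))
                         + effZ N ?G1 s - int (preN N (count_list U) s)"
  proof (intro allI)
    fix s
    have "int (M1 s) = int (M s) - int (pre N t s) + int (post N t s)" using pl[of s] by (simp add: M1 of_nat_diff)
    then show "int (M1 s) = int (M' s) + int (preN N' (count_list U') s) + (int (init N s) - int (init N' s))
                         + effZ N ?G1 s - int (preN N (count_list U) s)"
      using G(3)[rule_format, of s] by (simp add: effZ_add[OF fG fd] effZ_single)
  qed
  have st1: "(M1,U) \<in> stmarks N" using st wfN t(1) by (auto simp: stmarks_def wf_net_def M1)
  have "(\<lambda>s. (M s + preN N (count_list U) s) - pre N t s + post N t s) \<in> reach N"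
    by (rule reach_step[OF r(1) t(1)]) (use pl in \<open>auto simp: le_fun_def intro: trans_le_add1\<close>)
  moreover have "(\<lambda>s. (M s + preN N (count_list U) s) - pre N t s + post N t s) =
    (\<lambda>s. M1 s + preN N (count_list U) s)"
  proof (rule ext)
    fix s show "M s + preN N (count_list U) s - pre N t s + post N t s = M1 s + preN N (count_list U) s"
      using pl[of s] by (simp add: M1)
  qed
  ultimately have r1: "(\<lambda>s. M1 s + preN N (count_list U) s) \<in> reach N" by simp
  show ?thesis unfolding Rel_def using st1 st(2) mp r1 r(2) fin1 le1 eq1 by blast
qed


lemma Rel_start:
  assumes R: "((M,U),(M',U')) \<in> Rel"
    and t: "t \<in> trans N" "lab N t = Some a" "pre N t \<le> M"
    and t': "t' \<in> trans N'" "lab N' t' = Some a" "pre N' t' \<le> M'"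
  shows "(((\<lambda>s. M s - pre N t s), U @ [t]), ((\<lambda>s. M' s - pre N' t' s), U' @ [t'])) \<in> Rel"
proof -
  from R obtain G where G: "fin_ms N G" "lab_empty N G"
    "\<forall>s. int (M s) = int (M' s) + int (preN N' (count_list U') s) + (int (init N s) - int (init N' s))
                         + effZ N G s - int (preN N (count_list U) s)"
    and st: "(M,U) \<in> stmarks N" "(M',U') \<in> stmarks N'" and mp: "map (lab N) U = map (lab N') U'"
    and r: "(\<lambda>s. M s + preN N (count_list U) s) \<in> reach N" "(\<lambda>s. M' s + preN N' (count_list U') s) \<in> reach N'"
    unfolding Rel_def by auto
  have pl: "pre N t s \<le> M s" for s using t(3) by (simp add: le_fun_def)
  have pl': "pre N' t' s \<le> M' s" for s using t'(3) by (simp add: le_fun_def)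
  have e1: "(\<lambda>s. M s - pre N t s + preN N (count_list (U @ [t])) s) = (\<lambda>s. M s + preN N (count_list U) s)"
    using pl by (simp add: preN_list_fun)
  have e2: "(\<lambda>s. M' s - pre N' t' s + preN N' (count_list (U' @ [t'])) s) = (\<lambda>s. M' s + preN N' (count_list U') s)"
    using pl' by (simp add: preN_list_fun)
  have eq: "\<forall>s. int (M s - pre N t s) = int (M' s - pre N' t' s) + int (preN N' (count_list (U'@[t'])) s) + (int (init N s) - int (init N' s))
                         + effZ N G s - int (preN N (count_list (U@[t])) s)"
  proof
    fix s show "int (M s - pre N t s) = int (M' s - pre N' t' s) + int (preN N' (count_list (U'@[t'])) s) + (int (init N s) - int (init N' s))
                         + effZ N G s - int (preN N (count_list (U@[t])) s)"
      using G(3)[rule_format, of s] pl[of s] pl'[of s] by (simp add: preN_list of_nat_diff)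
  qed
  have st1: "((\<lambda>s. M s - pre N t s), U @ [t]) \<in> stmarks N" using st t(1) by (auto simp: stmarks_def)
  have st2: "((\<lambda>s. M' s - pre N' t' s), U' @ [t']) \<in> stmarks N'" using st t'(1) by (auto simp: stmarks_def)
  show ?thesis unfolding Rel_def using st1 st2 mp t(2) t'(2) r e1 e2 G(1,2) eq by auto
qed

lemma Rel_fin:
  assumes R: "((M,U),(M',U')) \<in> Rel"
    and n: "1 \<le> n" "n \<le> length U" and l: "lab N (U ! (n - 1)) = Some a"
  shows "length U' = length U \<and> lab N' (U' ! (n - 1)) = Some a \<and>
    (((\<lambda>s. M s + post N (U ! (n - 1)) s), take (n - 1) U @ drop n U),
     ((\<lambda>s. M' s + post N' (U' ! (n - 1)) s), take (n - 1) U' @ drop n U')) \<in> Rel"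
proof -
  from R obtain G where G: "fin_ms N G" "lab_empty N G"
    "\<forall>s. int (M s) = int (M' s) + int (preN N' (count_list U') s) + (int (init N s) - int (init N' s))
                         + effZ N G s - int (preN N (count_list U) s)"
    and st: "(M,U) \<in> stmarks N" "(M',U') \<in> stmarks N'" and mp: "map (lab N) U = map (lab N') U'"
    and r: "(\<lambda>s. M s + preN N (count_list U) s) \<in> reach N" "(\<lambda>s. M' s + preN N' (count_list U') s) \<in> reach N'"
    unfolding Rel_def by auto
  define k where "k = n - 1"
  have kU: "k < length U" using n by (simp add: k_def)
  have len: "length U' = length U" using mp by (metis length_map)
  have kU': "k < length U'" using kU len by simp
  define t where "t = U ! k"
  define t' where "t' = U' ! k"
  have lt': "lab N' t' = Some a" using mp kU l unfolding t'_def k_def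
    by (metis kU len nth_map k_def)
  have tT: "t \<in> trans N" using st kU by (auto simp: stmarks_def t_def)
  have tT': "t' \<in> trans N'" using st kU' by (auto simp: stmarks_def t'_def)
  have tU: "t \<in> set U" using kU by (simp add: t_def)
  have tU': "t' \<in> set U'" using kU' by (simp add: t'_def)
  from cond1 tT l obtain t'' G0 where t'': "t'' \<in> trans N'" "lab N' t'' = Some a"
    and G0: "fin_ms N G0" "lab_empty N (\<lambda>x. int (G0 x))"
      "(\<lambda>s. int (post N' t'' s) - int (pre N' t'' s)) = effZ N (\<lambda>x. int (G0 x) + (if x = t then 1 else 0))"
    unfolding t_def k_def by fastforce
  have "t'' = t'" using plainN' t'' tT' lt' unfolding plain_def inj_on_def by metis
  note G0 = G0[unfolded this]
  let ?G0 = "\<lambda>x. int (G0 x)"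
  let ?d = "\<lambda>x. if x = t then (1::int) else 0"
  have fG0': "fin_ms N ?G0" using G0(1) by (simp add: fin_ms_def supp_def)
  have fG: "finite (supp G)" using G(1) by (simp add: fin_ms_def)
  have fG0: "finite (supp ?G0)" using fG0' by (simp add: fin_ms_def)
  have fd: "finite (supp ?d)" by (simp add: supp_single)
  let ?G1 = "\<lambda>x. G x - ?G0 x"
  have fin1: "fin_ms N ?G1" by (rule fin_ms_diff[OF G(1) fG0'])
  have le1: "lab_empty N ?G1" using G(2) G0(2) by (simp add: lab_empty_def labcnt_diff[OF fG fG0])
  have eff: "int (post N' t' s) - int (pre N' t' s) = effZ N ?G0 s + int (post N t s) - int (pre N t s)" for s
    using fun_cong[OF G0(3), of s] by (simp add: effZ_add[OF fG0 fd] effZ_single)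
  let ?V = "take k U @ drop (Suc k) U"
  let ?V' = "take k U' @ drop (Suc k) U'"
  have pU: "preN N (count_list U) s = preN N (count_list ?V) s + pre N t s" for s
    unfolding preN_list t_def using sum_list_remove_nth[OF kU] by simp
  have pU': "preN N' (count_list U') s = preN N' (count_list ?V') s + pre N' t' s" for s
    unfolding preN_list t'_def using sum_list_remove_nth[OF kU'] by simp
  have eq: "\<forall>s. int (M s + post N t s) = int (M' s + post N' t' s) + int (preN N' (count_list ?V') s) + (int (init N s) - int (init N' s))
                         + effZ N ?G1 s - int (preN N (count_list ?V) s)"
  proof
    fix s show "int (M s + post N t s) = int (M' s + post N' t' s) + int (preN N' (count_list ?V') s) + (int (init N s) - int (init N' s))
                         + effZ N ?G1 s - int (preN N (count_list ?V) s)"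
      using G(3)[rule_format, of s] eff[of s] pU[of s] pU'[of s] by (simp add: effZ_diff[OF fG fG0])
  qed
  have pl: "pre N t s \<le> M s + preN N (count_list U) s" for s
    using mem_le_sum_list[OF tU, of "\<lambda>t. pre N t s"] by (simp add: preN_list)
  have pl': "pre N' t' s \<le> M' s + preN N' (count_list U') s" for s
    using mem_le_sum_list[OF tU', of "\<lambda>t. pre N' t s"] by (simp add: preN_list)
  have "(\<lambda>s. (M s + preN N (count_list U) s) - pre N t s + post N t s) \<in> reach N"
    by (rule reach_step[OF r(1) tT]) (use pl in \<open>auto simp: le_fun_def\<close>)
  moreover have "(\<lambda>s. (M s + preN N (count_list U) s) - pre N t s + post N t s) =
    (\<lambda>s. (M s + post N t s) + preN N (count_list ?V) s)" by (rule ext) (simp add: pU)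
  ultimately have r1: "(\<lambda>s. (M s + post N t s) + preN N (count_list ?V) s) \<in> reach N" by simp
  have "(\<lambda>s. (M' s + preN N' (count_list U') s) - pre N' t' s + post N' t' s) \<in> reach N'"
    by (rule reach_step[OF r(2) tT']) (use pl' in \<open>auto simp: le_fun_def\<close>)
  moreover have "(\<lambda>s. (M' s + preN N' (count_list U') s) - pre N' t' s + post N' t' s) =
    (\<lambda>s. (M' s + post N' t' s) + preN N' (count_list ?V') s)" by (rule ext) (simp add: pU')
  ultimately have r2: "(\<lambda>s. (M' s + post N' t' s) + preN N' (count_list ?V') s) \<in> reach N'" by simp
  have st1: "((\<lambda>s. M s + post N t s), ?V) \<in> stmarks N" using st tT wfN
    by (auto simp: stmarks_def wf_net_def dest: in_set_takeD in_set_dropD)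
  have st2: "((\<lambda>s. M' s + post N' t' s), ?V') \<in> stmarks N'" using st tT' wfN'
    by (auto simp: stmarks_def wf_net_def dest: in_set_takeD in_set_dropD)
  have mp2: "map (lab N) ?V = map (lab N') ?V'" using mp by (metis map_append take_map drop_map)
  have nk: "n = Suc k" using n by (simp add: k_def)
  have "(((\<lambda>s. M s + post N t s), ?V), ((\<lambda>s. M' s + post N' t' s), ?V')) \<in> Rel"
    unfolding Rel_def using st1 st2 mp2 r1 r2 fin1 le1 eq by blast
  then show ?thesis using len lt' by (simp add: t_def t'_def nk)
qed

lemma Rel_wait:
  assumes R: "((M,U),(M',U')) \<in> Rel" and en: "enabled_lab N' M' (Some a)"
  shows "\<exists>Mk. (\<lambda>x y. st_step N x Tau y)\<^sup>*\<^sup>* (M,U) (Mk,U) \<and> ((Mk,U),(M',U')) \<in> Rel \<and>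
              enabled_lab N Mk (Some a)"
proof -
  define X where "X = {M. ((M,U),(M',U')) \<in> Rel}"
  define Rr where "Rr = {(y,x). x \<in> X \<and> tau_step N x y}"
  have wf: "wf Rr"
    unfolding wf_iff_no_infinite_down_chain
  proof
    assume "\<exists>f. \<forall>i. (f (Suc i), f i) \<in> Rr"
    then obtain f where f: "\<forall>i. (f (Suc i), f i) \<in> Rr" by blast
    have "f 0 \<in> X" using f[rule_format, of 0] by (simp add: Rr_def)
    then have "((f 0,U),(M',U')) \<in> Rel" by (simp add: X_def)
    from Rel_cond[OF this] f show False by (auto simp: Rr_def)
  qed
  have "\<forall>M. M \<in> X \<longrightarrow> (\<exists>Mk. (\<lambda>x y. st_step N x Tau y)\<^sup>*\<^sup>* (M,U) (Mk,U) \<and> ((Mk,U),(M',U')) \<in> Rel \<and>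
              enabled_lab N Mk (Some a))"
  proof (intro allI)
    fix M0 show "M0 \<in> X \<longrightarrow> (\<exists>Mk. (\<lambda>x y. st_step N x Tau y)\<^sup>*\<^sup>* (M0,U) (Mk,U) \<and> ((Mk,U),(M',U')) \<in> Rel \<and>
              enabled_lab N Mk (Some a))"
    proof (induction M0 rule: wf_induct[OF wf])
      case (1 M)
      show ?case
      proof
        assume MX: "M \<in> X"
        then have RM: "((M,U),(M',U')) \<in> Rel" by (simp add: X_def)
        from Rel_cond[OF RM] en have "enabled_lab N M (Some a) \<or> enabled_lab N M None" by blast
        then show "\<exists>Mk. (\<lambda>x y. st_step N x Tau y)\<^sup>*\<^sup>* (M,U) (Mk,U) \<and> ((Mk,U),(M',U')) \<in> Rel \<and>
              enabled_lab N Mk (Some a)"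
        proof
          assume "enabled_lab N M (Some a)" then show ?thesis using RM by blast
        next
          assume "enabled_lab N M None"
          then obtain t where t: "t \<in> trans N" "lab N t = None" "pre N t \<le> M"
            unfolding enabled_lab_def by blast
          define M1 where "M1 = (\<lambda>s. M s - pre N t s + post N t s)"
          have ts: "tau_step N M M1" unfolding tau_step_def M1_def using t by blast
          have R1: "((M1,U),(M',U')) \<in> Rel" by (rule Rel_tau[OF RM ts])
          have "(M1, M) \<in> Rr" using MX ts by (simp add: Rr_def)
          with 1 R1 obtain Mk where Mk: "(\<lambda>x y. st_step N x Tau y)\<^sup>*\<^sup>* (M1,U) (Mk,U)"
            "((Mk,U),(M',U')) \<in> Rel" "enabled_lab N Mk (Some a)" by (auto simp: X_def)
          have "st_step N (M,U) Tau (M1,U)" using ts by (simp add: st_step_def)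
          then have "(\<lambda>x y. st_step N x Tau y)\<^sup>*\<^sup>* (M,U) (Mk,U)"
            using Mk(1) by (rule converse_rtranclp_into_rtranclp)
          then show ?thesis using Mk by blast
        qed
      qed
    qed
  qed
  moreover have "M \<in> X" using R by (simp add: X_def)
  ultimately show ?thesis by blast
qed


lemma Rel_sub: "Rel \<subseteq> stmarks N \<times> stmarks N'"
  unfolding Rel_def by auto

lemma Rel_init: "((init N, []), (init N', [])) \<in> Rel"
proof -
  have p0: "preN N (count_list []) = (\<lambda>s. 0)" "preN N' (count_list []) = (\<lambda>s. 0)"
    by (simp_all add: preN_list_fun)
  have r: "init N \<in> reach N" "init N' \<in> reach N'" by (simp_all add: reach_def)
  have e0: "effZ N (\<lambda>x. 0) s = 0" for s by (simp add: effZ_def postZ_def preZ_def supp_def)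
  have f0: "fin_ms N (\<lambda>x. 0::int)" by (simp add: fin_ms_def supp_def)
  have l0: "lab_empty N (\<lambda>x. 0::int)" by (simp add: lab_empty_def labcnt_def supp_def)
  have st: "(init N, []) \<in> stmarks N" "(init N', []) \<in> stmarks N'"
    using wfN wfN' by (auto simp: stmarks_def wf_net_def)
  show ?thesis unfolding Rel_def using p0 r e0 f0 l0 st by auto
qed

lemma no_tau': "\<not> st_step N' m Tau m'"
  using plainN' by (auto simp: st_step_def tau_step_def plain_def)

lemma half1: "bb_half (st_step N) (st_step N') Tau Rel"
  unfolding bb_half_def
proof (intro conjI allI impI)
  fix m1 m2 al m1'
  assume h: "(m1, m2) \<in> Rel \<and> st_step N m1 al m1'"
  obtain M U where m1: "m1 = (M,U)" by fastforce
  obtain M' U' where m2: "m2 = (M',U')" by fastforce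
  have R: "((M,U),(M',U')) \<in> Rel" using h m1 m2 by simp
  show "\<exists>m2d m2'. (\<lambda>x y. st_step N' x Tau y)\<^sup>*\<^sup>* m2 m2d \<and>
           (st_step N' m2d al m2' \<or> al = Tau \<and> m2' = m2d) \<and> (m1, m2d) \<in> Rel \<and> (m1', m2') \<in> Rel"
  proof (cases al)
    case (Start a)
    from h obtain t where t: "t \<in> trans N" "lab N t = Some a" "pre N t \<le> M"
      and m1': "m1' = ((\<lambda>s. M s - pre N t s), U @ [t])"
      unfolding Start st_step_def m1 by auto
    from Rel_cond[OF R] t obtain t' where t': "t' \<in> trans N'" "lab N' t' = Some a" "pre N' t' \<le> M'"
      unfolding enabled_lab_def by blast
    have "st_step N' m2 al ((\<lambda>s. M' s - pre N' t' s), U' @ [t'])"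
      unfolding Start st_step_def m2 using t' by auto
    then show ?thesis using Rel_start[OF R t t'] h m1' by blast
  next
    case (Fin a n)
    from h have n: "1 \<le> n" "n \<le> length U" "lab N (U ! (n - 1)) = Some a"
      and m1': "m1' = ((\<lambda>s. M s + post N (U ! (n - 1)) s), take (n - 1) U @ drop n U)"
      unfolding Fin st_step_def m1 by auto
    note F = Rel_fin[OF R n]
    have "st_step N' m2 al ((\<lambda>s. M' s + post N' (U' ! (n - 1)) s), take (n - 1) U' @ drop n U')"
      unfolding Fin st_step_def m2 using F n by auto
    then show ?thesis using F h m1' by blast
  next
    case Tau
    from h have "tau_step N M (fst m1')" "snd m1' = U" unfolding Tau st_step_def m1 by auto
    then have "(m1', m2) \<in> Rel" using Rel_tau[OF R] m2 by (metis prod.collapse)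
    then show ?thesis using h Tau by blast
  qed
next
  fix m1 m2 f
  assume h: "(m1, m2) \<in> Rel \<and> f 0 = m1 \<and> (\<forall>i. st_step N (f i) Tau (f (Suc i))) \<and> (\<forall>i. (f i, m2) \<in> Rel)"
  obtain M U where m1: "m1 = (M,U)" by fastforce
  obtain M' U' where m2: "m2 = (M',U')" by fastforce
  have R: "((M,U),(M',U')) \<in> Rel" using h m1 m2 by simp
  have "\<forall>i. tau_step N (fst (f i)) (fst (f (Suc i)))" using h by (simp add: st_step_def)
  moreover have "fst (f 0) = M" using h m1 by simp
  ultimately have "\<exists>f'. f' 0 = M \<and> (\<forall>i. tau_step N (f' i) (f' (Suc i)))"
    by (intro exI[of _ "\<lambda>i. fst (f i)"]) simp
  then have False using Rel_cond[OF R] by blast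
  then show "\<exists>g. g 0 = m2 \<and> (\<forall>i. st_step N' (g i) Tau (g (Suc i))) \<and> (\<forall>i j. (f i, g j) \<in> Rel)" ..
qed

lemma half2: "bb_half (st_step N') (st_step N) Tau (Rel\<inverse>)"
  unfolding bb_half_def
proof (intro conjI allI impI)
  fix m1 m2 al m1'
  assume h: "(m1, m2) \<in> Rel\<inverse> \<and> st_step N' m1 al m1'"
  obtain M U where m2: "m2 = (M,U)" by fastforce
  obtain M' U' where m1: "m1 = (M',U')" by fastforce
  have R: "((M,U),(M',U')) \<in> Rel" using h m1 m2 by simp
  show "\<exists>m2d m2'. (\<lambda>x y. st_step N x Tau y)\<^sup>*\<^sup>* m2 m2d \<and>
           (st_step N m2d al m2' \<or> al = Tau \<and> m2' = m2d) \<and> (m1, m2d) \<in> Rel\<inverse> \<and> (m1', m2') \<in> Rel\<inverse>"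
  proof (cases al)
    case (Start a)
    from h obtain t' where t': "t' \<in> trans N'" "lab N' t' = Some a" "pre N' t' \<le> M'"
      and m1': "m1' = ((\<lambda>s. M' s - pre N' t' s), U' @ [t'])"
      unfolding Start st_step_def m1 by auto
    have "enabled_lab N' M' (Some a)" using t' unfolding enabled_lab_def by blast
    from Rel_wait[OF R this] obtain Mk where Mk: "(\<lambda>x y. st_step N x Tau y)\<^sup>*\<^sup>* (M,U) (Mk,U)"
      "((Mk,U),(M',U')) \<in> Rel" "enabled_lab N Mk (Some a)" by blast
    from Mk(3) obtain t where t: "t \<in> trans N" "lab N t = Some a" "pre N t \<le> Mk"
      unfolding enabled_lab_def by blast
    have "st_step N (Mk,U) al ((\<lambda>s. Mk s - pre N t s), U @ [t])"
      unfolding Start st_step_def using t by auto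
    then show ?thesis using Rel_start[OF Mk(2) t t'] Mk m1 m2 m1' by auto
  next
    case (Fin a n)
    from h have n: "1 \<le> n" "n \<le> length U'" "lab N' (U' ! (n - 1)) = Some a"
      and m1': "m1' = ((\<lambda>s. M' s + post N' (U' ! (n - 1)) s), take (n - 1) U' @ drop n U')"
      unfolding Fin st_step_def m1 by auto
    have mp: "map (lab N) U = map (lab N') U'" using R by (simp add: Rel_def)
    have len: "length U = length U'" using mp by (metis length_map)
    have n2: "n \<le> length U" using n len by simp
    have l2: "lab N (U ! (n - 1)) = Some a" using n mp len
      by (metis diff_less less_le_trans nth_map zero_less_one)
    note F = Rel_fin[OF R n(1) n2 l2]
    have "st_step N m2 al ((\<lambda>s. M s + post N (U ! (n - 1)) s), take (n - 1) U @ drop n U)"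
      unfolding Fin st_step_def m2 using n2 l2 n by auto
    then show ?thesis using F h m1' by blast
  next
    case Tau
    then show ?thesis using h no_tau' by blast
  qed
next
  fix m1 m2 f
  assume h: "(m1, m2) \<in> Rel\<inverse> \<and> f 0 = m1 \<and> (\<forall>i. st_step N' (f i) Tau (f (Suc i))) \<and> (\<forall>i. (f i, m2) \<in> Rel\<inverse>)"
  then have False using no_tau' by blast
  then show "\<exists>g. g 0 = m2 \<and> (\<forall>i. st_step N (g i) Tau (g (Suc i))) \<and> (\<forall>i j. (f i, g j) \<in> Rel\<inverse>)" ..
qed

lemma main: "bSTb_div N N'"
  unfolding bSTb_div_def using Rel_sub Rel_init half1 half2 by blast

end


theorem lemma6p4:
  fixes N :: "('s, 't, 'a) pnet" and N' :: "('s, 'u, 'a) pnet"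
  assumes wfN: "wf_net N" and wfN': "wf_net N'" and plainN': "plain N'"
    and sub: "places N' \<subseteq> places N"
    and initN': "\<forall>s. init N' s = (if s \<in> places N' then init N s else 0)"
    and cond1: "\<forall>t\<in>trans N. lab N t \<noteq> None \<longrightarrow>
       (\<exists>t'\<in>trans N'. lab N' t' = lab N t \<and>
          (\<exists>G :: 't \<Rightarrow> nat. fin_ms N G \<and> lab_empty N (\<lambda>x. int (G x)) \<and>
             (\<lambda>s. int (post N' t' s) - int (pre N' t' s)) =
             effZ N (\<lambda>x. int (G x) + (if x = t then 1 else 0))))"
    and cond2: "\<forall>(G :: 't \<Rightarrow> int) (M' :: 's \<Rightarrow> nat) (U' :: 'u \<Rightarrow> nat) (U :: 't \<Rightarrow> nat) (M :: 's \<Rightarrow> nat).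
       fin_ms N G \<and> lab_empty N G \<and>
       (\<forall>s. s \<notin> places N' \<longrightarrow> M' s = 0) \<and> fin_ms N' U' \<and> fin_ms N U \<and>
       (\<forall>al. labcnt N' (\<lambda>x. int (U' x)) al = labcnt N (\<lambda>x. int (U x)) al) \<and>
       (\<lambda>s. M' s + preN N' U' s) \<in> reach N' \<and>
       (\<forall>s. int (M s) = int (M' s) + int (preN N' U' s) + (int (init N s) - int (init N' s))
                         + effZ N G s - int (preN N U s)) \<and>
       (\<lambda>s. M s + preN N U s) \<in> reach N
       \<longrightarrow>
       (\<not> (\<exists>f. f 0 = M \<and> (\<forall>i. tau_step N (f i) (f (Suc i))))) \<and>
       (\<forall>a. enabled_lab N' M' (Some a) \<longrightarrow> enabled_lab N M (Some a) \<or> enabled_lab N M None) \<and>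
       (\<forall>a. enabled_lab N M (Some a) \<longrightarrow> enabled_lab N' M' (Some a))"
  shows "bSTb_div N N'"
  proof -
  interpret L N N' by (rule L.intro[OF assms])
  show ?thesis by (rule main)
qed

end
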